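(* Let $\Phi$ be a (finite crystallographic, possibly non-reduced) root system and $V\le\mathbb R\Phi$ a subspace. 1. If $V$ is $1$-small and $\alpha\in\Phi\cap V$, then there is an irreducible saturated root subsystem $\alpha\in\Psi\subseteq\Phi$ of rank $2$ with $\mathbb R\Psi\cap V=\mathbb R\alpha$. 2. If $V$ is $2$-small and $\alpha,\beta\in\Phi$ are linearly independent with $(\mathbb R\alpha+\mathbb R\beta)\cap V$ one-dimensional, then there is an irreducible saturated root subsystem $\alpha\in\Psi\subseteq\Phi$ of rank $2$ with $\beta\notin\Psi$ and $(\mathbb R\Psi+\mathbb R\beta)\cap V$ one-dimensional. 3. If $V$ is $2$-small and $\alpha,\beta\in\Phi\cap V$ are linearly independent, then there is an irreducible saturated root subsystem $\alpha\in\Psi\subseteq\Phi$ of rank $2$ with $\beta\notin\Psi$ and $\mathbb R\Psi\cap V=\mathbb R\alpha$. 4. If $V$ is $2$-small, $\alpha\in\Phi\cap V$ and $\beta,\gamma\in\Phi\setminus V$ are linearly independent, and $(\mathbb R\alpha+\mathbb R\beta+\mathbb R\gamma)\cap V$ is two-dimensional, then there is an irreducible saturated root subsystem $\alpha\in\Psi\subseteq\Phi$ of rank $2$ with $\beta,\gamma\notin\Psi$ such that both $(\mathbb R\Psi+\mathbb R\beta)\cap V$ and $(\mathbb R\Psi+\mathbb R\gamma)\cap V$ are one-dimensional. 5. If $V$ is $2$-small, the roots $\alpha\in\Phi\cap V$ and $\beta,\gamma\in\Phi\setminus V$ are linearly independent, and $(\mathbb R\alpha+\mathbb R\beta+\mathbb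 R\gamma)\cap V$ is two-dimensional, then there is an irreducible saturated root subsystem $\gamma\in\Psi\subseteq\Phi$ of rank $2$ such that $\mathbb R\alpha+\mathbb R\beta+\mathbb R\Psi$ is four-dimensional and $(\mathbb R\Psi+\mathbb R\alpha+\mathbb R\beta)\cap V$ is two-dimensional.
   Context: A subspace $V\le\mathbb R\Phi$ is $k$-small if for every irreducible component $\Psi$ of $\Phi$ the codimension of $V\cap\mathbb R\Psi$ in $\mathbb R\Psi$ is at least $k$. A saturated root subsystem of $\Phi$ is a subset of the form $\Phi\cap W$ for a linear subspace $W$. *)

theory Defs
  imports "HOL-Analysis.Analysis"
begin

definition root_system :: "'a::euclidean_space set \<Rightarrow> bool" where
  "root_system \<Phi> \<longleftrightarrow> finite \<Phi> \<and> 0 \<notin> \<Phi> \<and>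
     (\<forall>\<alpha>\<in>\<Phi>. \<forall>\<beta>\<in>\<Phi>. \<beta> - (2 * (\<beta> \<bullet> \<alpha>) / (\<alpha> \<bullet> \<alpha>)) *\<^sub>R \<alpha> \<in> \<Phi>) \<and>
     (\<forall>\<alpha>\<in>\<Phi>. \<forall>\<beta>\<in>\<Phi>. 2 * (\<beta> \<bullet> \<alpha>) / (\<alpha> \<bullet> \<alpha>) \<in> \<int>)"

definition irreducible_roots :: "'a::euclidean_space set \<Rightarrow> bool" where
  "irreducible_roots \<Psi> \<longleftrightarrow> \<Psi> \<noteq> {} \<and>
     (\<forall>A B. A \<union> B = \<Psi> \<longrightarrow> A \<inter> B = {} \<longrightarrow> (\<forall>a\<in>A. \<forall>b\<in>B. a \<bullet> b = 0) \<longrightarrow> A = {} \<or> B = {})"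

definition irreducible_component :: "'a::euclidean_space set \<Rightarrow> 'a set \<Rightarrow> bool" where
  "irreducible_component \<Phi> \<Psi> \<longleftrightarrow> \<Psi> \<subseteq> \<Phi> \<and> irreducible_roots \<Psi> \<and>
     (\<forall>a\<in>\<Psi>. \<forall>b\<in>\<Phi> - \<Psi>. a \<bullet> b = 0)"

definition k_small :: "nat \<Rightarrow> 'a::euclidean_space set \<Rightarrow> 'a set \<Rightarrow> bool" where
  "k_small k \<Phi> V \<longleftrightarrow> (\<forall>\<Psi>. irreducible_component \<Phi> \<Psi> \<longrightarrow>
      dim (V \<inter> span \<Psi>) + k \<le> dim (span \<Psi>))"

definition saturated_subsystem :: "'a::euclidean_space set \<Rightarrow> 'a set \<Rightarrow> bool" where
  "saturated_subsystem \<Phi> \<Psi> \<longleftrightarrow> (\<exists>W. subspace W \<and> \<Psi> = \<Phi> \<inter> W)"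

definition rank :: "'a::euclidean_space set \<Rightarrow> nat" where
  "rank \<Psi> = dim (span \<Psi>)"

definition good_sub :: "'a::euclidean_space set \<Rightarrow> 'a set \<Rightarrow> bool" where
  "good_sub \<Phi> \<Psi> \<longleftrightarrow> saturated_subsystem \<Phi> \<Psi> \<and> irreducible_roots \<Psi> \<and> rank \<Psi> = 2"

end

theory Submission
  imports Defs
begin

lemma dimInt:
  fixes V S T :: "'a::euclidean_space set"
  assumes "subspace V" "subspace S" "subspace T" "S \<subseteq> T"
  shows "dim (V \<inter> T) + dim S \<le> dim T + dim (V \<inter> S)"
proof -
  have sVT: "subspace (V \<inter> T)" using assms by (simp add: subspace_inter)
  have e: "dim {x + y |x y. x \<in> V \<inter> T \<and> y \<in> S} + dim ((V \<inter> T) \<inter> S) = dim (V \<inter> T) + dim S"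
    using dim_sums_Int[OF sVT assms(2)] .
  have "{x + y |x y. x \<in> V \<inter> T \<and> y \<in> S} \<subseteq> T"
    using assms(3,4) subspace_add by blast
  hence "dim {x + y |x y. x \<in> V \<inter> T \<and> y \<in> S} \<le> dim T" by (rule dim_subset)
  moreover have "dim ((V \<inter> T) \<inter> S) = dim (V \<inter> S)" using assms(4)
    by (metis Int_absorb2 inf_assoc inf_commute)
  ultimately show ?thesis using e by linarith
qed

lemma keyK:
  fixes V P N :: "'a::euclidean_space set"
  assumes V: "subspace V" and P: "subspace P"
    and N: "N \<subseteq> {v + p |v p. v \<in> V \<and> p \<in> P}"
    and dP: "dim P \<le> dim (V \<inter> P) + 1"
  shows "dim (span N) \<le> dim (V \<inter> span N) + 1"
proof -
  define S where "S = span N"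
  define T where "T = {s + p |s p. s \<in> S \<and> p \<in> P}"
  define VP where "VP = {v + p |v p. v \<in> V \<and> p \<in> P}"
  have sS: "subspace S" unfolding S_def by simp
  have sT: "subspace T" unfolding T_def using subspace_sums[OF sS P] .
  have sVP: "subspace VP" unfolding VP_def using subspace_sums[OF V P] .
  have ST: "S \<subseteq> T" unfolding T_def
  proof
    fix x assume "x \<in> S" thus "x \<in> {s + p |s p. s \<in> S \<and> p \<in> P}"
      by (metis (mono_tags, lifting) P add.right_neutral mem_Collect_eq subspace_0)
  qed
  have PT: "P \<subseteq> T" unfolding T_def
  proof
    fix x assume "x \<in> P" thus "x \<in> {s + p |s p. s \<in> S \<and> p \<in> P}"
      by (metis (mono_tags, lifting) sS add_0 mem_Collect_eq subspace_0)
  qed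
  have "S \<subseteq> VP" unfolding S_def using N sVP VP_def by (simp add: span_minimal)
  have PVP: "P \<subseteq> VP" unfolding VP_def
  proof
    fix x assume "x \<in> P" thus "x \<in> {v + p |v p. v \<in> V \<and> p \<in> P}"
      by (metis (mono_tags, lifting) V add_0 mem_Collect_eq subspace_0)
  qed
  have TVP: "T \<subseteq> VP" unfolding T_def using \<open>S \<subseteq> VP\<close> PVP sVP subspace_add by blast
  define W where "W = {v + p |v p. v \<in> V \<inter> T \<and> p \<in> P}"
  have TW: "T \<subseteq> W"
  proof
    fix t assume t: "t \<in> T"
    then obtain v p where vp: "t = v + p" "v \<in> V" "p \<in> P" using TVP unfolding VP_def by blast
    have "v = t - p" using vp by simp
    hence "v \<in> T" using t PT vp sT subspace_diff by blast
    thus "t \<in> W" unfolding W_def using vp by blast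
  qed
  have sVT: "subspace (V \<inter> T)" using V sT by (simp add: subspace_inter)
  have e: "dim W + dim ((V \<inter> T) \<inter> P) = dim (V \<inter> T) + dim P"
    unfolding W_def using dim_sums_Int[OF sVT P] .
  have "(V \<inter> T) \<inter> P = V \<inter> P" using PT by blast
  hence "dim ((V \<inter> T) \<inter> P) = dim (V \<inter> P)" by simp
  moreover have "dim T \<le> dim W" using TW by (rule dim_subset)
  ultimately have 1: "dim T \<le> dim (V \<inter> T) + 1" using e dP by linarith
  have 2: "dim (V \<inter> T) + dim S \<le> dim T + dim (V \<inter> S)" using dimInt[OF V sS sT ST] .
  show ?thesis using 1 2 unfolding S_def by linarith
qed



lemma rs_facts:
  assumes "root_system \<Phi>"
  shows "finite \<Phi>" "0 \<notin> \<Phi>"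
    "\<And>a b. a \<in> \<Phi> \<Longrightarrow> b \<in> \<Phi> \<Longrightarrow> b - (2 * (b \<bullet> a) / (a \<bullet> a)) *\<^sub>R a \<in> \<Phi>"
  using assms unfolding root_system_def by auto

lemma comp_exists:
  fixes \<Phi> :: "'a::euclidean_space set"
  assumes rs: "root_system \<Phi>" and a: "a \<in> \<Phi>"
  shows "\<exists>C. irreducible_component \<Phi> C \<and> span C = span {d\<in>\<Phi>. d \<bullet> a \<noteq> 0}"
proof -
  define R where "R = {(x,y). x \<in> \<Phi> \<and> y \<in> \<Phi> \<and> x \<bullet> y \<noteq> 0}"
  define C where "C = {g\<in>\<Phi>. (a,g) \<in> R\<^sup>*}"
  define N where "N = {d\<in>\<Phi>. d \<bullet> a \<noteq> 0}"
  have a0: "a \<noteq> 0" using a rs_facts(2)[OF rs] by auto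
  have aC: "a \<in> C" unfolding C_def using a by simp
  have CP: "C \<subseteq> \<Phi>" unfolding C_def by auto
  have clos: "y \<in> C" if "x \<in> C" "y \<in> \<Phi>" "x \<bullet> y \<noteq> 0" for x y
  proof -
    have "(x,y) \<in> R" using that CP unfolding R_def by auto
    thus ?thesis using that unfolding C_def by (auto intro: rtrancl_into_rtrancl)
  qed
  have half: "B = {}" if "A \<union> B = C" "A \<inter> B = {}" "\<forall>x\<in>A. \<forall>y\<in>B. x \<bullet> y = 0" "a \<in> A" for A B
  proof -
    have "g \<in> A" if "(a,g) \<in> R\<^sup>*" for g
      using that
    proof (induction rule: rtrancl_induct)
      case base thus ?case using \<open>a \<in> A\<close> .
    next
      case (step y z)
      have "y \<in> C" using step.IH \<open>A \<union> B = C\<close> by auto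
      have zP: "z \<in> \<Phi>" and yz: "y \<bullet> z \<noteq> 0" using step.hyps(2) unfolding R_def by auto
      have "z \<in> C" using clos[OF \<open>y \<in> C\<close> zP yz] .
      moreover have "z \<notin> B" using \<open>\<forall>x\<in>A. \<forall>y\<in>B. x \<bullet> y = 0\<close> step.IH yz by auto
      ultimately show ?case using \<open>A \<union> B = C\<close> by auto
    qed
    hence "C \<subseteq> A" unfolding C_def by auto
    thus ?thesis using that(1,2) by auto
  qed
  have irr: "irreducible_roots C"
    unfolding irreducible_roots_def
  proof (intro conjI allI impI)
    show "C \<noteq> {}" using aC by auto
  next
    fix A B assume h: "A \<union> B = C" "A \<inter> B = {}" "\<forall>a\<in>A. \<forall>b\<in>B. a \<bullet> b = 0"
    show "A = {} \<or> B = {}"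
    proof (cases "a \<in> A")
      case True thus ?thesis using half[OF h] by auto
    next
      case False
      hence "a \<in> B" using aC h(1) by auto
      moreover have "B \<union> A = C" "B \<inter> A = {}" using h by auto
      moreover have "\<forall>x\<in>B. \<forall>y\<in>A. x \<bullet> y = 0" using h(3) by (metis inner_commute)
      ultimately show ?thesis using half[of B A] by auto
    qed
  qed
  have ic: "irreducible_component \<Phi> C"
    unfolding irreducible_component_def using CP irr clos by (auto simp: inner_commute)
  have NC: "N \<subseteq> C" using clos[OF aC] unfolding N_def by (auto simp: inner_commute)
  define A where "A = C \<inter> span N"
  define B where "B = C - span N"
  have borth: "b \<bullet> x = 0" if b: "b \<in> B" and x: "x \<in> span N" for b x
  proof -
    have bN: "b \<bullet> d = 0" if d: "d \<in> N" for d
    proof (rule ccontr)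
      assume bd: "b \<bullet> d \<noteq> 0"
      have bP: "b \<in> \<Phi>" using b CP unfolding B_def by auto
      have dP: "d \<in> \<Phi>" and da: "d \<bullet> a \<noteq> 0" using d unfolding N_def by auto
      have "b \<notin> N" using b span_superset unfolding B_def by blast
      hence ba: "b \<bullet> a = 0" using bP unfolding N_def by auto
      have d0: "d \<noteq> 0" using dP rs_facts(2)[OF rs] by auto
      hence dd: "d \<bullet> d \<noteq> 0" by simp
      define c where "c = 2 * (b \<bullet> d) / (d \<bullet> d)"
      have c0: "c \<noteq> 0" using bd dd unfolding c_def by simp
      define r where "r = b - c *\<^sub>R d"
      have rP: "r \<in> \<Phi>" unfolding r_def c_def using rs_facts(3)[OF rs dP bP] .
      have "r \<bullet> a = - c * (d \<bullet> a)" unfolding r_def using ba by (simp add: inner_diff_left)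
      hence "r \<bullet> a \<noteq> 0" using c0 da by simp
      hence "r \<in> N" using rP unfolding N_def by auto
      hence "r + c *\<^sub>R d \<in> span N" using d by (simp add: span_add span_base span_scale)
      hence "b \<in> span N" unfolding r_def by simp
      thus False using b unfolding B_def by auto
    qed
    have "orthogonal b x"
      by (rule orthogonal_to_span[OF x]) (use bN in \<open>auto simp: orthogonal_def\<close>)
    thus ?thesis by (simp add: orthogonal_def)
  qed
  have "A \<union> B = C" "A \<inter> B = {}" unfolding A_def B_def by auto
  moreover have "\<forall>x\<in>A. \<forall>y\<in>B. x \<bullet> y = 0"
    using borth unfolding A_def by (metis IntD2 inner_commute)
  moreover have "a \<in> A" unfolding A_def using aC a a0
    by (simp add: N_def span_base)
  ultimately have "B = {}" using half by blast
  hence "C \<subseteq> span N" unfolding B_def by auto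
  hence "span C \<subseteq> span N" by (simp add: span_minimal)
  moreover have "span N \<subseteq> span C" using NC by (rule span_mono)
  ultimately show ?thesis using ic unfolding N_def by blast
qed

lemma small_N:
  fixes \<Phi> V :: "'a::euclidean_space set"
  assumes rs: "root_system \<Phi>" and a: "a \<in> \<Phi>" and ks: "k_small k \<Phi> V"
  shows "dim (V \<inter> span {d\<in>\<Phi>. d \<bullet> a \<noteq> 0}) + k \<le> dim (span {d\<in>\<Phi>. d \<bullet> a \<noteq> 0})"
  using comp_exists[OF rs a] ks unfolding k_small_def by metis

lemma good_pair:
  fixes \<Phi> :: "'a::euclidean_space set"
  assumes rs: "root_system \<Phi>" and a: "a \<in> \<Phi>" and d: "d \<in> \<Phi>" and ad: "d \<bullet> a \<noteq> 0"
    and nd: "d \<notin> span {a}"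
  shows "good_sub \<Phi> (\<Phi> \<inter> span {a, d}) \<and> a \<in> \<Phi> \<inter> span {a, d} \<and> d \<in> \<Phi> \<inter> span {a, d}
     \<and> span (\<Phi> \<inter> span {a, d}) = span {a, d}"
proof -
  let ?P = "\<Phi> \<inter> span {a, d}"
  have aP: "a \<in> ?P" and dP: "d \<in> ?P" using a d by (auto simp: span_base)
  have sp: "span ?P = span {a, d}"
  proof
    show "span ?P \<subseteq> span {a, d}" by (simp add: span_minimal)
    show "span {a, d} \<subseteq> span ?P" using aP dP by (simp add: span_mono)
  qed
  have a0: "a \<noteq> 0" using a rs_facts(2)[OF rs] by auto
  have "dim {a, d} = 2"
  proof -
    have "dim (insert d {a}) = dim {a} + 1" using nd by (simp add: dim_insert)
    thus ?thesis using a0 by (simp add: insert_commute)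
  qed
  hence rk: "rank ?P = 2" unfolding rank_def using sp by simp
  have sat: "saturated_subsystem \<Phi> ?P" unfolding saturated_subsystem_def
    by (rule exI[of _ "span {a, d}"]) simp
  have irr: "irreducible_roots ?P" unfolding irreducible_roots_def
  proof (intro conjI allI impI)
    show "?P \<noteq> {}" using aP by auto
  next
    fix A B assume h: "A \<union> B = ?P" "A \<inter> B = {}" "\<forall>x\<in>A. \<forall>y\<in>B. x \<bullet> y = 0"
    have key: "Y = {}" if "X \<union> Y = ?P" "X \<inter> Y = {}" "\<forall>x\<in>X. \<forall>y\<in>Y. x \<bullet> y = 0" "a \<in> X" for X Y
    proof (rule ccontr)
      assume "Y \<noteq> {}"
      then obtain e where e: "e \<in> Y" by auto
      have "d \<in> X"
      proof (rule ccontr)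
        assume "d \<notin> X" hence "d \<in> Y" using that(1) dP by auto
        hence "a \<bullet> d = 0" using that(3,4) by auto
        thus False using ad by (simp add: inner_commute)
      qed
      have ea: "orthogonal e a" and ed: "orthogonal e d"
        using that(3,4) \<open>d \<in> X\<close> e by (auto simp: orthogonal_def inner_commute)
      have eS: "e \<in> span {a, d}" and eP: "e \<in> \<Phi>" using e that(1) by auto
      have "orthogonal e e"
        by (rule orthogonal_to_span[OF eS]) (use ea ed in auto)
      hence "e = 0" by (simp add: orthogonal_def)
      thus False using eP rs_facts(2)[OF rs] by auto
    qed
    show "A = {} \<or> B = {}"
    proof (cases "a \<in> A")
      case True thus ?thesis using key[OF h] by auto
    next
      case False
      hence "a \<in> B" using aP h(1) by auto
      moreover have "B \<union> A = ?P" "B \<inter> A = {}" using h by auto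
      moreover have "\<forall>x\<in>B. \<forall>y\<in>A. x \<bullet> y = 0" using h(3) by (metis inner_commute)
      ultimately show ?thesis using key[of B A] by auto
    qed
  qed
  show ?thesis using sat irr rk aP dP sp unfolding good_sub_def by auto
qed



lemma fail_dim:
  fixes V W :: "'a::euclidean_space set"
  assumes V: "subspace V" and W: "subspace W" and VW: "V \<subseteq> W" and PW: "span P0 \<subseteq> W"
    and d: "d \<notin> W" and m: "dim (span P0 \<inter> V) = m"
  shows "dim (span (insert d P0) \<inter> V) = m"
proof -
  have sub: "span P0 \<inter> V \<subseteq> span (insert d P0) \<inter> V" using span_mono[of P0 "insert d P0"] by auto
  have ge: "m \<le> dim (span (insert d P0) \<inter> V)" using dim_subset[OF sub] m by simp
  have le: "dim (span (insert d P0) \<inter> V) \<le> m"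
  proof (cases "span (insert d P0) \<inter> V \<subseteq> span P0 \<inter> V")
    case True from dim_subset[OF True] show ?thesis using m by simp
  next
    case False
    then obtain v where v: "v \<in> V" "v \<in> span (insert d P0)" "v \<notin> span P0" by auto
    then obtain k where k: "v - k *\<^sub>R d \<in> span P0" using span_insert[of d P0] by auto
    have k0: "k \<noteq> 0" using k v(3) by auto
    have vW: "v \<in> W" using v VW by auto
    have "v - k *\<^sub>R d \<in> W" using k PW by auto
    hence "v - (v - k *\<^sub>R d) \<in> W" using vW W subspace_diff by blast
    hence "k *\<^sub>R d \<in> W" by simp
    hence "(1/k) *\<^sub>R (k *\<^sub>R d) \<in> W" using W subspace_scale by blast
    hence "d \<in> W" using k0 by simp
    thus ?thesis using d by simp
  qed
  show ?thesis using ge le by simp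
qed

lemma exists_out1:
  fixes \<Phi> V :: "'a::euclidean_space set"
  assumes rs: "root_system \<Phi>" and a: "a \<in> \<Phi>" and ks: "k_small k \<Phi> V" and k: "k \<ge> 1"
    and V: "subspace V"
  shows "\<exists>d\<in>\<Phi>. d \<bullet> a \<noteq> 0 \<and> d \<notin> V"
proof (rule ccontr)
  assume "\<not> ?thesis"
  hence "{d\<in>\<Phi>. d \<bullet> a \<noteq> 0} \<subseteq> V" by auto
  hence "span {d\<in>\<Phi>. d \<bullet> a \<noteq> 0} \<subseteq> V" using V by (simp add: span_minimal)
  hence "V \<inter> span {d\<in>\<Phi>. d \<bullet> a \<noteq> 0} = span {d\<in>\<Phi>. d \<bullet> a \<noteq> 0}" by auto
  thus False using small_N[OF rs a ks] k by simp
qed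

lemma exists_out2:
  fixes \<Phi> V P :: "'a::euclidean_space set"
  assumes rs: "root_system \<Phi>" and a: "a \<in> \<Phi>" and ks: "k_small 2 \<Phi> V"
    and V: "subspace V" and P: "subspace P" and dP: "dim P \<le> dim (V \<inter> P) + 1"
  shows "\<exists>d\<in>\<Phi>. d \<bullet> a \<noteq> 0 \<and> d \<notin> {v + p |v p. v \<in> V \<and> p \<in> P}"
proof (rule ccontr)
  assume "\<not> ?thesis"
  hence "{d\<in>\<Phi>. d \<bullet> a \<noteq> 0} \<subseteq> {v + p |v p. v \<in> V \<and> p \<in> P}" by blast
  from keyK[OF V P this dP] small_N[OF rs a ks] show False by simp
qed

lemma VP_facts:
  fixes V P :: "'a::euclidean_space set"
  assumes V: "subspace V" and P: "subspace P"
  shows "subspace {v + p |v p. v \<in> V \<and> p \<in> P}" "V \<subseteq> {v + p |v p. v \<in> V \<and> p \<in> P}"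
    "P \<subseteq> {v + p |v p. v \<in> V \<and> p \<in> P}"
proof -
  show "subspace {v + p |v p. v \<in> V \<and> p \<in> P}" using subspace_sums[OF V P] .
  show "V \<subseteq> {v + p |v p. v \<in> V \<and> p \<in> P}"
  proof
    fix x assume "x \<in> V" thus "x \<in> {v + p |v p. v \<in> V \<and> p \<in> P}"
      by (metis (mono_tags, lifting) P add.right_neutral mem_Collect_eq subspace_0)
  qed
  show "P \<subseteq> {v + p |v p. v \<in> V \<and> p \<in> P}"
  proof
    fix x assume "x \<in> P" thus "x \<in> {v + p |v p. v \<in> V \<and> p \<in> P}"
      by (metis (mono_tags, lifting) V add_0 mem_Collect_eq subspace_0)
  qed
qed

lemma span_insert_cong:
  assumes "span A = span B"
  shows "span (insert x A) = span (insert x B)"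
  unfolding span_insert[of x A] span_insert[of x B] using assms by simp

lemma span_Un_cong:
  assumes "span A = span B"
  shows "span (X \<union> A) = span (X \<union> B)"
  unfolding span_Un[of X A] span_Un[of X B] using assms by simp


lemma card2: "card {a, b} \<le> 2"
  by (cases "a = b") auto
lemma card3: "card {a, b, c} \<le> 3"
proof -
  have "card {a, b, c} \<le> Suc (card {b, c})" by (simp add: card_insert_if)
  thus ?thesis using card2[of b c] by simp
qed
lemma indep2:
  fixes a b :: "'a::euclidean_space"
  assumes "independent {a, b}" "a \<noteq> b"
  shows "b \<notin> span {a}" "a \<noteq> 0"
proof -
  have "independent (insert b {a})" using assms(1) by (simp add: insert_commute)
  thus "b \<notin> span {a}" using assms(2) by (simp add: independent_insert)
  show "a \<noteq> 0" using assms(1) dependent_zero[of "{a,b}"] by blast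
qed

lemma in_span_out:
  fixes W :: "'a::euclidean_space set"
  assumes W: "subspace W" and x: "x \<in> span (insert d P0)" "x \<in> W" and PW: "span P0 \<subseteq> W"
    and d: "d \<notin> W"
  shows "x \<in> span P0"
proof (rule ccontr)
  assume nx: "x \<notin> span P0"
  obtain k where k: "x - k *\<^sub>R d \<in> span P0" using x(1) span_insert[of d P0] by auto
  have k0: "k \<noteq> 0" using k nx by auto
  have "x - k *\<^sub>R d \<in> W" using k PW by auto
  hence "x - (x - k *\<^sub>R d) \<in> W" using x(2) W subspace_diff by blast
  hence "k *\<^sub>R d \<in> W" by simp
  hence "(1/k) *\<^sub>R (k *\<^sub>R d) \<in> W" using W subspace_scale by blast
  hence "d \<in> W" using k0 by simp
  thus False using d by simp
qed

lemma part1: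
  fixes \<Phi> V :: "'a::euclidean_space set"
  assumes rs: "root_system \<Phi>" and V: "subspace V" and ks: "k_small k \<Phi> V" and k: "k \<ge> 1"
    and a: "a \<in> \<Phi>" "a \<in> V"
  shows "\<exists>\<Psi>. good_sub \<Phi> \<Psi> \<and> a \<in> \<Psi> \<and> (\<forall>b. b \<in> V \<and> b \<notin> span {a} \<longrightarrow> b \<notin> \<Psi>) \<and> span \<Psi> \<inter> V = span {a}"
proof -
  obtain d where d: "d \<in> \<Phi>" "d \<bullet> a \<noteq> 0" "d \<notin> V" using exists_out1[OF rs a(1) ks k V] by auto
  have aV: "span {a} \<subseteq> V" using a(2) V by (simp add: span_minimal)
  have nd: "d \<notin> span {a}" using d aV by auto
  note g = good_pair[OF rs a(1) d(1) d(2) nd]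
  have e: "span {a, d} = span (insert d {a})" by (simp add: insert_commute)
  have "span {a, d} \<inter> V = span {a}"
  proof
    show "span {a, d} \<inter> V \<subseteq> span {a}" unfolding e using in_span_out[OF V _ _ aV d(3)] by blast
    show "span {a} \<subseteq> span {a, d} \<inter> V" using aV span_mono[of "{a}" "{a,d}"] by auto
  qed
  moreover have "\<forall>b. b \<in> V \<and> b \<notin> span {a} \<longrightarrow> b \<notin> \<Phi> \<inter> span {a, d}"
    using in_span_out[OF V _ _ aV d(3)] unfolding e by blast
  ultimately show ?thesis using g by (intro exI[of _ "\<Phi> \<inter> span {a, d}"]) simp
qed

lemma dim_le1:
  fixes V :: "'a::euclidean_space set"
  assumes V: "subspace V" and a: "a \<in> V" "a \<noteq> 0" and b: "b \<notin> V"
  shows "dim (span {a, b} \<inter> V) = 1"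
proof -
  have s1: "span {a} \<subseteq> V" using a V by (simp add: span_minimal)
  have s2: "span {a} \<subseteq> span {a, b}" by (rule span_mono) auto
  have "span {a} \<subseteq> span {a, b} \<inter> V" using s1 s2 by blast
  from dim_subset[OF this] have ge: "1 \<le> dim (span {a, b} \<inter> V)" using a(2) by simp
  have c2: "dim (span {a, b}) \<le> 2"
    using dim_le_card[of "span {a,b}" "{a,b}"] card2[of a b] by simp
  have le: "dim (span {a, b} \<inter> V) \<le> 1"
  proof (rule ccontr)
    assume "\<not> ?thesis"
    hence "dim (span {a, b}) \<le> dim (span {a, b} \<inter> V)" using c2 by linarith
    hence "span {a, b} \<inter> V = span {a, b}"
      using subspace_dim_equal[of "span {a, b} \<inter> V" "span {a,b}"] V
      by (simp add: subspace_inter)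
    thus False using b span_base[of b "{a,b}"] by auto
  qed
  show ?thesis using ge le by simp
qed



lemma part2:
  fixes \<Phi> V :: "'a::euclidean_space set"
  assumes rs: "root_system \<Phi>" and V: "subspace V" and ks: "k_small 2 \<Phi> V"
    and a: "a \<in> \<Phi>" and b: "b \<in> \<Phi>" and ab: "a \<noteq> b" "independent {a, b}"
    and dm: "dim (span {a, b} \<inter> V) = 1"
  shows "\<exists>\<Psi>. good_sub \<Phi> \<Psi> \<and> a \<in> \<Psi> \<and> b \<notin> \<Psi> \<and> dim (span (insert b \<Psi>) \<inter> V) = 1"
proof -
  define P where "P = span {a, b}"
  have sP: "subspace P" unfolding P_def by simp
  have dP: "dim P = 2" unfolding P_def using dim_span_eq_card_independent[OF ab(2)] ab(1) by simp
  have dVP: "dim (V \<inter> P) = 1" using dm unfolding P_def by (simp add: Int_commute)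
  obtain d where d: "d \<in> \<Phi>" "d \<bullet> a \<noteq> 0" "d \<notin> {v + p |v p. v \<in> V \<and> p \<in> P}"
    using exists_out2[OF rs a ks V sP] dP dVP by auto
  define W where "W = {v + p |v p. v \<in> V \<and> p \<in> P}"
  note wf = VP_facts[OF V sP, folded W_def]
  have dW: "d \<notin> W" using d(3) W_def by simp
  have aP: "span {a} \<subseteq> P" unfolding P_def by (rule span_mono) auto
  have nd: "d \<notin> span {a}" using aP wf(3) dW by auto
  note g = good_pair[OF rs a d(1) d(2) nd]
  have dnP: "d \<notin> P" using wf(3) dW by auto
  have bP: "b \<in> P" unfolding P_def by (simp add: span_base)
  have e: "span {a, d} = span (insert d {a})" by (simp add: insert_commute)
  have "b \<notin> span {a, d}" using in_span_out[OF sP _ bP aP dnP] indep2(1)[OF ab(2,1)] unfolding e by blast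
  hence bn: "b \<notin> \<Phi> \<inter> span {a, d}" by simp
  have "span (insert b (\<Phi> \<inter> span {a, d})) = span (insert b {a, d})"
    using span_insert_cong g by blast
  also have "\<dots> = span (insert d {a, b})" by (simp add: insert_commute)
  finally have sp: "span (insert b (\<Phi> \<inter> span {a, d})) = span (insert d {a, b})" .
  have "span {a, b} \<subseteq> W" using wf(3) unfolding P_def by auto
  hence "dim (span (insert d {a, b}) \<inter> V) = 1" using fail_dim[OF V wf(1) wf(2) _ dW dm] by blast
  thus ?thesis using g bn sp by (intro exI[of _ "\<Phi> \<inter> span {a, d}"]) simp
qed


lemma part4:
  fixes \<Phi> V :: "'a::euclidean_space set"
  assumes rs: "root_system \<Phi>" and V: "subspace V" and ks: "k_small 2 \<Phi> V"
    and a: "a \<in> \<Phi>" "a \<in> V" and b: "b \<in> \<Phi>" "b \<notin> V" and c: "c \<in> \<Phi>" "c \<notin> V"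
    and bc: "b \<noteq> c" "independent {b, c}"
    and dm: "dim (span {a, b, c} \<inter> V) = 2"
  shows "\<exists>\<Psi>. good_sub \<Phi> \<Psi> \<and> a \<in> \<Psi> \<and> b \<notin> \<Psi> \<and> c \<notin> \<Psi> \<and>
            dim (span (insert b \<Psi>) \<inter> V) = 1 \<and> dim (span (insert c \<Psi>) \<inter> V) = 1"
proof -
  define P where "P = span {b, c}"
  define Q where "Q = span {a, b, c}"
  have sP: "subspace P" unfolding P_def by simp
  have sQ: "subspace Q" unfolding Q_def by simp
  have PQ: "P \<subseteq> Q" unfolding P_def Q_def by (rule span_mono) auto
  have dP: "dim P = 2" unfolding P_def using dim_span_eq_card_independent[OF bc(2)] bc(1) by simp
  have dQ: "dim Q \<le> 3" unfolding Q_def using dim_le_card[of "span {a,b,c}" "{a,b,c}"] card3[of a b c]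
    by simp
  have "dim (V \<inter> Q) + dim P \<le> dim Q + dim (V \<inter> P)" using dimInt[OF V sP sQ PQ] .
  moreover have "dim (V \<inter> Q) = 2" using dm unfolding Q_def by (simp add: Int_commute)
  ultimately have dVP: "dim P \<le> dim (V \<inter> P) + 1" using dP dQ by linarith
  obtain d where d: "d \<in> \<Phi>" "d \<bullet> a \<noteq> 0" "d \<notin> {v + p |v p. v \<in> V \<and> p \<in> P}"
    using exists_out2[OF rs a(1) ks V sP dVP] by auto
  define W where "W = {v + p |v p. v \<in> V \<and> p \<in> P}"
  note wf = VP_facts[OF V sP, folded W_def]
  have dW: "d \<notin> W" using d(3) W_def by simp
  have aV: "span {a} \<subseteq> V" using a(2) V by (simp add: span_minimal)
  have aW: "span {a} \<subseteq> W" using aV wf(2) by auto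
  have nd: "d \<notin> span {a}" using aW dW by auto
  have a0: "a \<noteq> 0" using a(1) rs_facts(2)[OF rs] by auto
  note g = good_pair[OF rs a(1) d(1) d(2) nd]
  have e: "span {a, d} = span (insert d {a})" by (simp add: insert_commute)
  have bW: "b \<in> W" and cW: "c \<in> W" using wf(3) unfolding P_def by (auto simp: span_base)
  have aW': "a \<in> W" using a(2) wf(2) by auto
  have "b \<notin> span {a, d}" using in_span_out[OF wf(1) _ bW aW dW] aV b(2) unfolding e by blast
  hence bn: "b \<notin> \<Phi> \<inter> span {a, d}" by simp
  have "c \<notin> span {a, d}" using in_span_out[OF wf(1) _ cW aW dW] aV c(2) unfolding e by blast
  hence cn: "c \<notin> \<Phi> \<inter> span {a, d}" by simp
  have spb: "span (insert b (\<Phi> \<inter> span {a, d})) = span (insert d {a, b})"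
    using span_insert_cong[of "\<Phi> \<inter> span {a, d}" "{a,d}" b] g by (simp add: insert_commute)
  have spc: "span (insert c (\<Phi> \<inter> span {a, d})) = span (insert d {a, c})"
    using span_insert_cong[of "\<Phi> \<inter> span {a, d}" "{a,d}" c] g by (simp add: insert_commute)
  have abW: "span {a, b} \<subseteq> W" using wf(1) aW' bW by (simp add: span_minimal)
  have acW: "span {a, c} \<subseteq> W" using wf(1) aW' cW by (simp add: span_minimal)
  have "dim (span (insert d {a, b}) \<inter> V) = 1"
    using fail_dim[OF V wf(1) wf(2) abW dW dim_le1[OF V a(2) a0 b(2)]] .
  moreover have "dim (span (insert d {a, c}) \<inter> V) = 1"
    using fail_dim[OF V wf(1) wf(2) acW dW dim_le1[OF V a(2) a0 c(2)]] .
  ultimately show ?thesis using g bn cn spb spc by (intro exI[of _ "\<Phi> \<inter> span {a, d}"]) simp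
qed


lemma part5:
  fixes \<Phi> V :: "'a::euclidean_space set"
  assumes rs: "root_system \<Phi>" and V: "subspace V" and ks: "k_small 2 \<Phi> V"
    and a: "a \<in> \<Phi>" "a \<in> V" and b: "b \<in> \<Phi>" "b \<notin> V" and c: "c \<in> \<Phi>" "c \<notin> V"
    and bc: "b \<noteq> c" "independent {a, b, c}"
    and dm: "dim (span {a, b, c} \<inter> V) = 2"
  shows "\<exists>\<Psi>. good_sub \<Phi> \<Psi> \<and> c \<in> \<Psi> \<and>
            dim (span ({a, b} \<union> \<Psi>)) = 4 \<and> dim (span ({a, b} \<union> \<Psi>) \<inter> V) = 2"
proof -
  define Q where "Q = span {a, b, c}"
  have sQ: "subspace Q" unfolding Q_def by simp
  have ne: "a \<noteq> b" "a \<noteq> c" using a b c by auto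
  have dQ: "dim Q = 3" unfolding Q_def using dim_span_eq_card_independent[OF bc(2)] bc(1) ne by simp
  have dVQ: "dim (V \<inter> Q) = 2" using dm unfolding Q_def by (simp add: Int_commute)
  obtain d where d: "d \<in> \<Phi>" "d \<bullet> c \<noteq> 0" "d \<notin> {v + p |v p. v \<in> V \<and> p \<in> Q}"
    using exists_out2[OF rs c(1) ks V sQ] dQ dVQ by auto
  define W where "W = {v + p |v p. v \<in> V \<and> p \<in> Q}"
  note wf = VP_facts[OF V sQ, folded W_def]
  have dW: "d \<notin> W" using d(3) W_def by simp
  have cQ: "span {c} \<subseteq> Q" unfolding Q_def by (rule span_mono) auto
  have nd: "d \<notin> span {c}" using cQ wf(3) dW by auto
  note g = good_pair[OF rs c(1) d(1) d(2) nd]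
  have sp: "span ({a, b} \<union> (\<Phi> \<inter> span {c, d})) = span (insert d {a, b, c})"
  proof -
    have "span ({a, b} \<union> (\<Phi> \<inter> span {c, d})) = span ({a, b} \<union> {c, d})"
      using span_Un_cong[of "\<Phi> \<inter> span {c, d}" "{c,d}" "{a,b}"] g by blast
    moreover have "{a, b} \<union> {c, d} = insert d {a, b, c}" by auto
    ultimately show ?thesis by simp
  qed
  have dnQ: "d \<notin> span {a, b, c}" using wf(3) dW unfolding Q_def by auto
  have "dim (insert d {a, b, c}) = dim {a, b, c} + 1" using dim_insert[of d "{a, b, c}"] dnQ by simp
  moreover have "dim {a, b, c} = 3" using dQ unfolding Q_def by simp
  ultimately have f4: "dim (insert d {a, b, c}) = 4" by simp
  have f2: "dim (span (insert d {a, b, c}) \<inter> V) = 2"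
    using fail_dim[OF V wf(1) wf(2) _ dW dm] wf(3) unfolding Q_def by simp
  have h1: "dim (span ({a, b} \<union> (\<Phi> \<inter> span {c, d}))) = 4" unfolding sp dim_span by (rule f4)
  have h2: "dim (span ({a, b} \<union> (\<Phi> \<inter> span {c, d})) \<inter> V) = 2" unfolding sp by (rule f2)
  have g1: "good_sub \<Phi> (\<Phi> \<inter> span {c, d})" and g2: "c \<in> \<Phi> \<inter> span {c, d}"
    using g by simp_all
  show ?thesis by (rule exI[of _ "\<Phi> \<inter> span {c, d}"], intro conjI, rule g1, rule g2, rule h1, rule h2)
qed




theorem mainTheorem2:
  fixes \<Phi> V :: "'a::euclidean_space set"
  assumes "root_system \<Phi>" and "subspace V" and "V \<subseteq> span \<Phi>"
  shows
   "(k_small 1 \<Phi> V \<longrightarrow> (\<forall>\<alpha>\<in>\<Phi> \<inter> V.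
       \<exists>\<Psi>. good_sub \<Phi> \<Psi> \<and> \<alpha> \<in> \<Psi> \<and> span \<Psi> \<inter> V = span {\<alpha>}))
  \<and> (k_small 2 \<Phi> V \<longrightarrow> (\<forall>\<alpha>\<in>\<Phi>. \<forall>\<beta>\<in>\<Phi>.
       \<alpha> \<noteq> \<beta> \<and> independent {\<alpha>, \<beta>} \<and> dim (span {\<alpha>, \<beta>} \<inter> V) = 1 \<longrightarrow>
       (\<exists>\<Psi>. good_sub \<Phi> \<Psi> \<and> \<alpha> \<in> \<Psi> \<and> \<beta> \<notin> \<Psi> \<and> dim (span (insert \<beta> \<Psi>) \<inter> V) = 1)))
  \<and> (k_small 2 \<Phi> V \<longrightarrow> (\<forall>\<alpha>\<in>\<Phi> \<inter> V. \<forall>\<beta>\<in>\<Phi> \<inter> V.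
       \<alpha> \<noteq> \<beta> \<and> independent {\<alpha>, \<beta>} \<longrightarrow>
       (\<exists>\<Psi>. good_sub \<Phi> \<Psi> \<and> \<alpha> \<in> \<Psi> \<and> \<beta> \<notin> \<Psi> \<and> span \<Psi> \<inter> V = span {\<alpha>})))
  \<and> (k_small 2 \<Phi> V \<longrightarrow> (\<forall>\<alpha>\<in>\<Phi> \<inter> V. \<forall>\<beta>\<in>\<Phi> - V. \<forall>\<gamma>\<in>\<Phi> - V.
       \<beta> \<noteq> \<gamma> \<and> independent {\<beta>, \<gamma>} \<and> dim (span {\<alpha>, \<beta>, \<gamma>} \<inter> V) = 2 \<longrightarrow>
       (\<exists>\<Psi>. good_sub \<Phi> \<Psi> \<and> \<alpha> \<in> \<Psi> \<and> \<beta> \<notin> \<Psi> \<and> \<gamma> \<notin> \<Psi> \<and>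
            dim (span (insert \<beta> \<Psi>) \<inter> V) = 1 \<and> dim (span (insert \<gamma> \<Psi>) \<inter> V) = 1)))
  \<and> (k_small 2 \<Phi> V \<longrightarrow> (\<forall>\<alpha>\<in>\<Phi> \<inter> V. \<forall>\<beta>\<in>\<Phi> - V. \<forall>\<gamma>\<in>\<Phi> - V.
       \<beta> \<noteq> \<gamma> \<and> independent {\<alpha>, \<beta>, \<gamma>} \<and> dim (span {\<alpha>, \<beta>, \<gamma>} \<inter> V) = 2 \<longrightarrow>
       (\<exists>\<Psi>. good_sub \<Phi> \<Psi> \<and> \<gamma> \<in> \<Psi> \<and>
            dim (span ({\<alpha>, \<beta>} \<union> \<Psi>)) = 4 \<and> dim (span ({\<alpha>, \<beta>} \<union> \<Psi>) \<inter> V) = 2)))"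
proof (intro conjI impI ballI)
  fix a assume ks: "k_small 1 \<Phi> V" and a: "a \<in> \<Phi> \<inter> V"
  obtain \<Psi> where "good_sub \<Phi> \<Psi>" "a \<in> \<Psi>" "span \<Psi> \<inter> V = span {a}"
    using part1[OF assms(1,2) ks _ , of a] a by auto
  thus "\<exists>\<Psi>. good_sub \<Phi> \<Psi> \<and> a \<in> \<Psi> \<and> span \<Psi> \<inter> V = span {a}" by blast
next
  fix a b assume ks: "k_small 2 \<Phi> V" and a: "a \<in> \<Phi>" and b: "b \<in> \<Phi>"
    and h: "a \<noteq> b \<and> independent {a, b} \<and> dim (span {a, b} \<inter> V) = 1"
  show "\<exists>\<Psi>. good_sub \<Phi> \<Psi> \<and> a \<in> \<Psi> \<and> b \<notin> \<Psi> \<and> dim (span (insert b \<Psi>) \<inter> V) = 1"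
    using part2[OF assms(1,2) ks a b] h by blast
next
  fix a b assume ks: "k_small 2 \<Phi> V" and a: "a \<in> \<Phi> \<inter> V" and b: "b \<in> \<Phi> \<inter> V"
    and h: "a \<noteq> b \<and> independent {a, b}"
  have nb: "b \<notin> span {a}" using indep2(1)[of a b] h by blast
  obtain \<Psi> where "good_sub \<Phi> \<Psi>" "a \<in> \<Psi>" "\<forall>b. b \<in> V \<and> b \<notin> span {a} \<longrightarrow> b \<notin> \<Psi>"
     "span \<Psi> \<inter> V = span {a}"
    using part1[OF assms(1,2) ks _ , of a] a by auto
  thus "\<exists>\<Psi>. good_sub \<Phi> \<Psi> \<and> a \<in> \<Psi> \<and> b \<notin> \<Psi> \<and> span \<Psi> \<inter> V = span {a}"
    using b nb by blast
next
  fix a b c assume ks: "k_small 2 \<Phi> V" and a: "a \<in> \<Phi> \<inter> V" and b: "b \<in> \<Phi> - V" and c: "c \<in> \<Phi> - V"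
    and h: "b \<noteq> c \<and> independent {b, c} \<and> dim (span {a, b, c} \<inter> V) = 2"
  show "\<exists>\<Psi>. good_sub \<Phi> \<Psi> \<and> a \<in> \<Psi> \<and> b \<notin> \<Psi> \<and> c \<notin> \<Psi> \<and>
            dim (span (insert b \<Psi>) \<inter> V) = 1 \<and> dim (span (insert c \<Psi>) \<inter> V) = 1"
    using part4[OF assms(1,2) ks, of a b c] a b c h by blast
next
  fix a b c assume ks: "k_small 2 \<Phi> V" and a: "a \<in> \<Phi> \<inter> V" and b: "b \<in> \<Phi> - V" and c: "c \<in> \<Phi> - V"
    and h: "b \<noteq> c \<and> independent {a, b, c} \<and> dim (span {a, b, c} \<inter> V) = 2"
  show "\<exists>\<Psi>. good_sub \<Phi> \<Psi> \<and> c \<in> \<Psi> \<and>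
            dim (span ({a, b} \<union> \<Psi>)) = 4 \<and> dim (span ({a, b} \<union> \<Psi>) \<inter> V) = 2"
    using part5[OF assms(1,2) ks, of a b c] a b c h by blast
qed


end
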